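(* Let $f\in\mathcal{F}_{G,M}$ be a WTP function, $\tilde f$ its concave relaxation, and $\widetilde F(\tilde x)=\max_{\tilde y\in\widetilde{\mathcal{Y}}_{\mathcal{M}}(\tilde x)}\tilde f(\tilde y)$ for $\tilde x\in\widetilde{\mathcal{X}}_\ell$. Then $\widetilde F$ is $GM^2\sqrt n$-Lipschitz with respect to the Euclidean norm on $\widetilde{\mathcal{X}}_\ell$.
   Context: $\mathcal{M}$ is a matroid on $[n]$ with matroid polytope $\mathcal{P}(\mathcal{M})$. $\widetilde{\mathcal{X}}_\ell=\{\tilde x\in[0,1]^n:\sum_i\tilde x_i\le\ell\}$, $\widetilde{\mathcal{Y}}_{\mathcal{M}}(\tilde x)=\{\tilde y\in[0,1]^n:\tilde y\in\mathcal{P}(\mathcal{M}),\tilde y\le\tilde x\}$. A WTP function is $f(y)=\sum_{j\in\mathcal{C}}c_j\min\{b_j,y\cdot w_j\}$ for $y\in\{0,1\}^n$ with finite $\mathcal{C}$, $c_j>0$, $b_j\in\mathbb{R}_{\ge0}\cup\{\infty\}$, $w_j\in\mathbb{R}^n_{\ge0}$; $\tilde f$ is the same formula on $[0,1]^n$. $\mathcal{F}_{G,M}$ is the class of WTP functions with $|\mathcal{C}|\le G$ and $c_j\le M$, $b_j\le M$, $\|w_j\|_\infty\le M$ for all $j\in\mathcal{C}$. *)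

theory Defs
  imports "HOL-Analysis.Analysis"
begin

text \<open>A matroid on the finite ground set UNIV of type 'n (playing the role of [n]),
  given by its family of independent sets.\<close>
definition matroid :: "('n::finite set \<Rightarrow> bool) \<Rightarrow> bool" where
  "matroid indep \<longleftrightarrow>
     indep {} \<and>
     (\<forall>A B. indep B \<and> A \<subseteq> B \<longrightarrow> indep A) \<and>
     (\<forall>A B. indep A \<and> indep B \<and> card A < card B \<longrightarrow> (\<exists>x\<in>B - A. indep (insert x A)))"

definition indicator_vec :: "'n::finite set \<Rightarrow> real ^ 'n" where
  "indicator_vec I = (\<chi> i. if i \<in> I then 1 else 0)"

definition matroid_polytope :: "('n::finite set \<Rightarrow> bool) \<Rightarrow> (real ^ 'n) set" where
  "matroid_polytope indep = convex hull {indicator_vec I | I. indep I}"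

definition unit_cube :: "(real ^ 'n::finite) set" where
  "unit_cube = {x. \<forall>i. 0 \<le> x $ i \<and> x $ i \<le> 1}"

definition X_tilde :: "real \<Rightarrow> (real ^ 'n::finite) set" where
  "X_tilde l = {x \<in> unit_cube. (\<Sum>i\<in>UNIV. x $ i) \<le> l}"

definition Y_tilde :: "('n::finite set \<Rightarrow> bool) \<Rightarrow> real ^ 'n \<Rightarrow> (real ^ 'n) set" where
  "Y_tilde indep x = {y \<in> unit_cube. y \<in> matroid_polytope indep \<and> (\<forall>i. y $ i \<le> x $ i)}"

text \<open>WTP function data (C, c, b, w); b_j may be \<infinity> (ereal).
  Its relaxation evaluated at y in [0,1]^n.\<close>
definition wtp_tilde ::
  "'c set \<Rightarrow> ('c \<Rightarrow> real) \<Rightarrow> ('c \<Rightarrow> ereal) \<Rightarrow> ('c \<Rightarrow> real ^ 'n::finite) \<Rightarrow> real ^ 'n \<Rightarrow> real" where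
  "wtp_tilde C c b w y = (\<Sum>j\<in>C. c j * real_of_ereal (min (b j) (ereal (y \<bullet> w j))))"

definition is_wtp :: "'c set \<Rightarrow> ('c \<Rightarrow> real) \<Rightarrow> ('c \<Rightarrow> ereal) \<Rightarrow> ('c \<Rightarrow> real ^ 'n::finite) \<Rightarrow> bool" where
  "is_wtp C c b w \<longleftrightarrow> finite C \<and>
     (\<forall>j\<in>C. c j > 0 \<and> b j \<ge> 0 \<and> (\<forall>i. w j $ i \<ge> 0))"

definition in_F_GM :: "nat \<Rightarrow> real \<Rightarrow> 'c set \<Rightarrow> ('c \<Rightarrow> real) \<Rightarrow> ('c \<Rightarrow> ereal) \<Rightarrow> ('c \<Rightarrow> real ^ 'n::finite) \<Rightarrow> bool" where
  "in_F_GM G M C c b w \<longleftrightarrow> is_wtp C c b w \<and> card C \<le> G \<and>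
     (\<forall>j\<in>C. c j \<le> M \<and> b j \<le> ereal M \<and> (\<forall>i. \<bar>w j $ i\<bar> \<le> M))"

definition F_tilde ::
  "('n::finite set \<Rightarrow> bool) \<Rightarrow> 'c set \<Rightarrow> ('c \<Rightarrow> real) \<Rightarrow> ('c \<Rightarrow> ereal) \<Rightarrow> ('c \<Rightarrow> real ^ 'n) \<Rightarrow> real ^ 'n \<Rightarrow> real" where
  "F_tilde indep C c b w x = (SUP y\<in>Y_tilde indep x. wtp_tilde C c b w y)"

end

theory Submission
  imports Defs
begin

lemma scale_one:
  assumes m: "matroid indep" and t: "0 \<le> t" "t \<le> 1"
    and y: "y \<in> matroid_polytope indep"
  shows "(\<chi> j. if j = i then t * y$j else y$j) \<in> matroid_polytope indep"
proof -
  define T where "T = (\<lambda>v::real^'a. \<chi> j. if j = i then t * v$j else v$j)"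
  have lin: "linear T"
    by (rule linearI) (auto simp: T_def vec_eq_iff algebra_simps)
  define gens where "gens = {indicator_vec I | I. indep I}"
  have sub: "T ` gens \<subseteq> matroid_polytope indep"
  proof
    fix v assume "v \<in> T ` gens"
    then obtain I where I: "indep I" "v = T (indicator_vec I)" by (auto simp: gens_def)
    have I2: "indep (I - {i})" using m I(1) unfolding matroid_def by blast
    have eq: "v = t *\<^sub>R indicator_vec I + (1 - t) *\<^sub>R indicator_vec (I - {i})"
      using I(2) by (auto simp: T_def vec_eq_iff indicator_vec_def algebra_simps)
    have a: "indicator_vec I \<in> matroid_polytope indep"
      using I(1) by (auto simp: matroid_polytope_def intro: hull_inc)
    have b: "indicator_vec (I - {i}) \<in> matroid_polytope indep"
      using I2 by (auto simp: matroid_polytope_def intro!: hull_inc)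
    show "v \<in> matroid_polytope indep" unfolding eq
      by (rule convexD[OF _ a b]) (use t in \<open>auto simp: matroid_polytope_def\<close>)
  qed
  have "T ` matroid_polytope indep = convex hull (T ` gens)"
    unfolding matroid_polytope_def gens_def by (rule convex_hull_linear_image[OF lin])
  also have "\<dots> \<subseteq> matroid_polytope indep"
    by (rule hull_minimal[OF sub]) (simp add: matroid_polytope_def)
  finally show ?thesis using y by (auto simp: T_def)
qed

lemma scale_set:
  assumes m: "matroid indep" and s: "\<And>i. 0 \<le> s i \<and> s i \<le> 1"
    and y: "y \<in> matroid_polytope indep" and fin: "finite S"
  shows "(\<chi> j. if j \<in> S then s j * y$j else y$j) \<in> matroid_polytope indep"
  using fin
proof (induction S rule: finite_induct)
  case empty
  then show ?case using y by simp
next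
  case (insert i S)
  have "(\<chi> j. if j = i then s i * (\<chi> j. if j \<in> S then s j * y$j else y$j)$j
           else (\<chi> j. if j \<in> S then s j * y$j else y$j)$j) \<in> matroid_polytope indep"
    by (rule scale_one[OF m _ _ insert.IH]) (use s in auto)
  moreover have "(\<chi> j. if j = i then s i * (\<chi> j. if j \<in> S then s j * y$j else y$j)$j
           else (\<chi> j. if j \<in> S then s j * y$j else y$j)$j)
     = (\<chi> j. if j \<in> insert i S then s j * y$j else y$j)"
    using insert.hyps by (auto simp: vec_eq_iff)
  ultimately show ?case by simp
qed

lemma down_closed:
  assumes m: "matroid indep" and y: "y \<in> matroid_polytope indep"
    and z: "\<And>i. 0 \<le> z$i \<and> z$i \<le> y$i"
  shows "z \<in> matroid_polytope indep"
proof -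
  define s where "s i = (if y$i = 0 then 1 else z$i / y$i)" for i
  have s: "0 \<le> s i \<and> s i \<le> 1" for i
    using z[of i] by (auto simp: s_def divide_le_eq_1)
  have "(\<chi> j. if j \<in> (UNIV::'a set) then s j * y$j else y$j) \<in> matroid_polytope indep"
    by (rule scale_set[OF m s y]) simp
  moreover have "(\<chi> j. if j \<in> (UNIV::'a set) then s j * y$j else y$j) = z"
    using z by (auto simp: vec_eq_iff s_def) (metis order_antisym)
  ultimately show ?thesis by simp
qed


lemma norm_w_bound:
  fixes v :: "real^'n::finite"
  assumes "\<And>i. \<bar>v$i\<bar> \<le> M"
  shows "norm v \<le> sqrt (real CARD('n)) * M"
proof -
  have M0: "0 \<le> M" using assms[of undefined] by linarith
  have "norm v = L2_set (\<lambda>i. norm (v$i)) UNIV" by (simp add: norm_vec_def)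
  also have "\<dots> \<le> L2_set (\<lambda>i. M) (UNIV::'n set)"
    using assms by (intro L2_set_mono) auto
  also have "\<dots> = sqrt (real CARD('n) * M^2)" by (simp add: L2_set_def)
  also have "\<dots> = sqrt (real CARD('n)) * M" using M0 by (simp add: real_sqrt_mult)
  finally show ?thesis .
qed

lemma min_diff: "min (a::real) p - min a q \<le> \<bar>p - q\<bar>"
  by (auto simp: min_def)

theorem lemma17:
  fixes indep :: "'n::finite set \<Rightarrow> bool"
    and C :: "'c set" and c :: "'c \<Rightarrow> real" and b :: "'c \<Rightarrow> ereal"
    and w :: "'c \<Rightarrow> real ^ 'n" and G :: nat and M l :: real
  assumes "matroid indep"
    and "in_F_GM G M C c b w"
  shows "lipschitz_on (real G * M\<^sup>2 * sqrt (real CARD('n))) (X_tilde l) (F_tilde indep C c b w)"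
proof -
  note m = assms(1)
  have finC: "finite C" and cpos: "\<And>j. j \<in> C \<Longrightarrow> c j > 0"
    and b0: "\<And>j. j \<in> C \<Longrightarrow> b j \<ge> 0" and cM: "\<And>j. j \<in> C \<Longrightarrow> c j \<le> M"
    and bM: "\<And>j. j \<in> C \<Longrightarrow> b j \<le> ereal M" and wM: "\<And>j i. j \<in> C \<Longrightarrow> \<bar>w j $ i\<bar> \<le> M"
    and cardC: "card C \<le> G"
    using assms(2) by (auto simp: in_F_GM_def is_wtp_def)
  define rb where "rb j = real_of_ereal (b j)" for j
  have bfin: "b j = ereal (rb j)" if "j \<in> C" for j
    using b0[OF that] bM[OF that] unfolding rb_def by (cases "b j") auto
  define f where "f y = (\<Sum>j\<in>C. c j * min (rb j) (y \<bullet> w j))" for y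
  have wf: "wtp_tilde C c b w = f"
  proof
    fix y
    show "wtp_tilde C c b w y = f y"
      unfolding wtp_tilde_def f_def
      by (rule sum.cong) (auto simp: bfin min_def)
  qed
  define L where "L = real G * M\<^sup>2 * sqrt (real CARD('n))"
  have L0: "0 \<le> L" unfolding L_def by simp
  have Fdef: "F_tilde indep C c b w x = (SUP y\<in>Y_tilde indep x. f y)" for x
    by (simp add: F_tilde_def wf)
  have zeroY: "0 \<in> Y_tilde indep x" if "x \<in> X_tilde l" for x
  proof -
    have "indicator_vec {} = (0::real^'n)" by (simp add: indicator_vec_def vec_eq_iff)
    moreover have "indep {}" using m by (simp add: matroid_def)
    ultimately have "0 \<in> matroid_polytope indep"
      unfolding matroid_polytope_def by (metis (mono_tags, lifting) hull_inc mem_Collect_eq)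
    then show ?thesis using that by (auto simp: Y_tilde_def X_tilde_def unit_cube_def)
  qed
  have bdd: "bdd_above (f ` Y_tilde indep x)" for x
  proof (rule bdd_aboveI2)
    fix y
    show "f y \<le> (\<Sum>j\<in>C. c j * rb j)"
      unfolding f_def by (rule sum_mono) (auto intro!: mult_left_mono dest: cpos simp: less_imp_le)
  qed
  have key: "F_tilde indep C c b w x \<le> F_tilde indep C c b w x' + L * dist x x'"
    if x: "x \<in> X_tilde l" and x': "x' \<in> X_tilde l" for x x'
  proof -
    have "(SUP y\<in>Y_tilde indep x. f y) \<le> F_tilde indep C c b w x' + L * dist x x'"
    proof (rule cSUP_least)
      show "Y_tilde indep x \<noteq> {}" using zeroY[OF x] by auto
    next
      fix y assume y: "y \<in> Y_tilde indep x"
      define y' where "y' = (\<chi> i. min (y$i) (x'$i))"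
      have ycube: "\<And>i. 0 \<le> y$i \<and> y$i \<le> 1" and yP: "y \<in> matroid_polytope indep"
        and yx: "\<And>i. y$i \<le> x$i"
        using y by (auto simp: Y_tilde_def unit_cube_def)
      have x'cube: "\<And>i. 0 \<le> x'$i \<and> x'$i \<le> 1" using x' by (auto simp: X_tilde_def unit_cube_def)
      have y'P: "y' \<in> matroid_polytope indep"
        by (rule down_closed[OF m yP]) (use ycube x'cube in \<open>auto simp: y'_def\<close>)
      have y'Y: "y' \<in> Y_tilde indep x'"
        using y'P ycube x'cube by (auto simp: Y_tilde_def unit_cube_def y'_def min_le_iff_disj)
      have nd: "norm (y - y') \<le> dist x x'"
        unfolding dist_norm
      proof (rule norm_le_componentwise_cart)
        fix i
        show "norm ((y - y') $ i) \<le> norm ((x - x') $ i)"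
          using yx[of i] ycube[of i] x'cube[of i] by (auto simp: y'_def min_def)
      qed
      have "f y - f y' = (\<Sum>j\<in>C. c j * (min (rb j) (y \<bullet> w j) - min (rb j) (y' \<bullet> w j)))"
        unfolding f_def by (simp add: sum_subtractf algebra_simps)
      also have "\<dots> \<le> (\<Sum>j\<in>C. M * (M * sqrt (real CARD('n)) * dist x x'))"
      proof (rule sum_mono)
        fix j assume j: "j \<in> C"
        have M0: "0 \<le> M" using cpos[OF j] cM[OF j] by linarith
        have "min (rb j) (y \<bullet> w j) - min (rb j) (y' \<bullet> w j) \<le> \<bar>y \<bullet> w j - y' \<bullet> w j\<bar>"
          by (rule min_diff)
        also have "\<dots> = \<bar>(y - y') \<bullet> w j\<bar>" by (simp add: inner_diff_left)
        also have "\<dots> \<le> norm (y - y') * norm (w j)" by (rule Cauchy_Schwarz_ineq2)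
        also have "\<dots> \<le> dist x x' * (sqrt (real CARD('n)) * M)"
          by (rule mult_mono[OF nd norm_w_bound]) (use wM[OF j] in auto)
        finally have d: "min (rb j) (y \<bullet> w j) - min (rb j) (y' \<bullet> w j) \<le> M * sqrt (real CARD('n)) * dist x x'"
          by (simp add: algebra_simps)
        have "c j * (min (rb j) (y \<bullet> w j) - min (rb j) (y' \<bullet> w j)) \<le> c j * (M * sqrt (real CARD('n)) * dist x x')"
          by (rule mult_left_mono[OF d]) (use cpos[OF j] in simp)
        also have "\<dots> \<le> M * (M * sqrt (real CARD('n)) * dist x x')"
          by (rule mult_right_mono[OF cM[OF j]]) (use M0 in simp)
        finally show "c j * (min (rb j) (y \<bullet> w j) - min (rb j) (y' \<bullet> w j)) \<le> M * (M * sqrt (real CARD('n)) * dist x x')" .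
      qed
      also have "\<dots> = real (card C) * (M\<^sup>2 * sqrt (real CARD('n)) * dist x x')"
        by (simp add: power2_eq_square algebra_simps)
      also have "\<dots> \<le> real G * (M\<^sup>2 * sqrt (real CARD('n)) * dist x x')"
        by (rule mult_right_mono) (use cardC in auto)
      also have "\<dots> = L * dist x x'" by (simp add: L_def)
      finally have "f y \<le> f y' + L * dist x x'" by simp
      also have "f y' \<le> F_tilde indep C c b w x'"
        unfolding Fdef by (rule cSUP_upper[OF y'Y bdd])
      finally show "f y \<le> F_tilde indep C c b w x' + L * dist x x'" by simp
    qed
    then show ?thesis by (simp add: Fdef)
  qed
  show ?thesis
    unfolding L_def[symmetric] lipschitz_on_def
  proof (intro conjI ballI L0)
    fix x x' :: "real^'n" assume "x \<in> X_tilde l" "x' \<in> X_tilde l"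
    with key[of x x'] key[of x' x] show "dist (F_tilde indep C c b w x) (F_tilde indep C c b w x') \<le> L * dist x x'"
      by (simp add: dist_real_def dist_commute abs_le_iff)
  qed
qed

end
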